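(* Let $p$ be a probability density on $\mathbb{R}^d$ that is log-concave, strictly positive on $\mathbb{R}^d$, and three times differentiable with $\sup_x\|\nabla^3\ln p(x)\|_F<\infty$. Let $\tau>0$, $y\in\mathbb{R}^d$, $F(x):=\tfrac12\|y-x\|^2-\tau\ln p(x)$ and, for $\sigma>0$, $F_\sigma(x):=\tfrac12\|y-x\|^2-\tau\ln p_\sigma(x)$. Let $\mathrm{prox}_{-\tau\ln p}(y):=\arg\min F$ and $\mathrm{prox}_{-\tau\ln p_\sigma}(y):=\arg\min F_\sigma$. Then $\mathrm{prox}_{-\tau\ln p_\sigma}(y)\to\mathrm{prox}_{-\tau\ln p}(y)$ as $\sigma\to0$.
   Context: For $\sigma>0$, $p_\sigma$ denotes the density of $X+\sigma\varepsilon$ where $X\sim p$ and $\varepsilon\sim\mathcal N(0,I_d)$ are independent. For a tensor $A\in\mathbb{R}^{d\times d\times d}$, $\|A\|_F=(\sum_{i,j,k}A_{ijk}^2)^{1/2}$. Both $F$ and $F_\sigma$ are strongly convex, so the minimisers are unique. *)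

theory Defs
  imports "HOL-Analysis.Analysis" "HOL-Probability.Probability"
begin

definition gauss_density :: "real \<Rightarrow> 'a::euclidean_space \<Rightarrow> real" where
  "gauss_density \<sigma> w = (2 * pi * \<sigma>\<^sup>2) powr (- real DIM('a) / 2) * exp (- (norm w)\<^sup>2 / (2 * \<sigma>\<^sup>2))"

text \<open>p_sigma: density of X + sigma*eps with X ~ p, eps ~ N(0,I) independent,
  i.e. the convolution of p with the N(0, sigma^2 I) density.\<close>
definition smoothed_density :: "('a::euclidean_space \<Rightarrow> real) \<Rightarrow> real \<Rightarrow> 'a \<Rightarrow> real" where
  "smoothed_density p \<sigma> x = (\<integral>z. p z * gauss_density \<sigma> (x - z) \<partial>lborel)"

text \<open>g is three times (Frechet) differentiable on the whole space, with gradient G1,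
  Hessian H (H x v = Hessian at x applied to v) and third derivative T
  (T x h v = derivative of the Hessian at x in direction h, applied to v), and the
  Frobenius norm of the third-derivative tensor is bounded uniformly in x.\<close>
definition thrice_diff_bdd_third :: "('a::euclidean_space \<Rightarrow> real) \<Rightarrow> bool" where
  "thrice_diff_bdd_third g \<longleftrightarrow>
    (\<exists>G1 H T.
      (\<forall>x. (g has_derivative (\<lambda>h. G1 x \<bullet> h)) (at x)) \<and>
      (\<forall>x. (G1 has_derivative H x) (at x)) \<and>
      (\<forall>x v. ((\<lambda>y. H y v) has_derivative (\<lambda>h. T x h v)) (at x)) \<and>
      (\<exists>M. \<forall>x. sqrt (\<Sum>i\<in>Basis. \<Sum>j\<in>Basis. \<Sum>k\<in>Basis. (T x i j \<bullet> k)\<^sup>2) \<le> M))"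

definition prox :: "real \<Rightarrow> ('a::euclidean_space \<Rightarrow> real) \<Rightarrow> 'a \<Rightarrow> 'a" where
  "prox \<tau> \<phi> y = arg_min (\<lambda>x. (1/2) * (norm (y - x))\<^sup>2 + \<tau> * \<phi> x) (\<lambda>_. True)"

end

theory Submission
  imports Defs
begin


lemma gauss_1d:
  fixes \<sigma> a m :: real
  assumes "\<sigma> > 0"
  shows "(\<integral>\<^sup>+t. ennreal (exp (a*t - (t - m)\<^sup>2/(2*\<sigma>\<^sup>2))) \<partial>lborel)
         = ennreal (sqrt (2*pi*\<sigma>\<^sup>2) * exp (a*m + \<sigma>\<^sup>2*a\<^sup>2/2))"
proof -
  let ?c = "sqrt (2*pi*\<sigma>\<^sup>2) * exp (a*m + \<sigma>\<^sup>2*a\<^sup>2/2)"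
  have c: "?c \<ge> 0" by simp
  have eq: "exp (a*t - (t - m)\<^sup>2/(2*\<sigma>\<^sup>2)) = ?c * normal_density (m + a*\<sigma>\<^sup>2) \<sigma> t" for t
  proof -
    have e: "a*t - (t - m)\<^sup>2/(2*\<sigma>\<^sup>2) = (a*m + \<sigma>\<^sup>2*a\<^sup>2/2) + (-(t - (m + a*\<sigma>\<^sup>2))\<^sup>2/(2*\<sigma>\<^sup>2))"
      using assms by (simp add: field_simps power2_eq_square)
    have "sqrt (2*pi*\<sigma>\<^sup>2) > 0" using assms by simp
    then show ?thesis using assms unfolding normal_density_def e exp_add by (simp add: field_simps)
  qed
  have "(\<integral>\<^sup>+t. ennreal (exp (a*t - (t - m)\<^sup>2/(2*\<sigma>\<^sup>2))) \<partial>lborel)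
      = (\<integral>\<^sup>+t. ennreal ?c * ennreal (normal_density (m + a*\<sigma>\<^sup>2) \<sigma> t) \<partial>lborel)"
    unfolding eq by (simp add: ennreal_mult)
  also have "\<dots> = ennreal ?c * (\<integral>\<^sup>+t. ennreal (normal_density (m + a*\<sigma>\<^sup>2) \<sigma> t) \<partial>lborel)"
    by (rule nn_integral_cmult) simp
  also have "(\<integral>\<^sup>+t. ennreal (normal_density (m + a*\<sigma>\<^sup>2) \<sigma> t) \<partial>lborel) = 1"
    using integrable_normal_density[OF assms] integral_normal_density[OF assms]
    by (subst nn_integral_eq_integral) auto
  finally show ?thesis by simp
qed

lemma gauss_density_prod:
  fixes x z :: "'a::euclidean_space"
  assumes "\<sigma> > 0"
  shows "exp (g \<bullet> z) * gauss_density \<sigma> (x - z) =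
    (\<Prod>b\<in>Basis. (2*pi*\<sigma>\<^sup>2) powr (-1/2) * exp ((g\<bullet>b) * (z\<bullet>b) - ((z\<bullet>b) - (x\<bullet>b))\<^sup>2/(2*\<sigma>\<^sup>2)))"
proof -
  have "(\<Prod>b\<in>Basis. (2*pi*\<sigma>\<^sup>2) powr (-1/2) * exp ((g\<bullet>b) * (z\<bullet>b) - ((z\<bullet>b) - (x\<bullet>b))\<^sup>2/(2*\<sigma>\<^sup>2)))
     = ((2*pi*\<sigma>\<^sup>2) powr (-1/2)) ^ DIM('a) * exp (\<Sum>b\<in>Basis. (g\<bullet>b) * (z\<bullet>b) - ((z\<bullet>b) - (x\<bullet>b))\<^sup>2/(2*\<sigma>\<^sup>2))"
    by (simp add: prod.distrib exp_sum)
  also have "((2*pi*\<sigma>\<^sup>2) powr (-1/2)) ^ DIM('a) = (2*pi*\<sigma>\<^sup>2) powr (- real DIM('a) / 2)"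
    proof -
      have "((2*pi*\<sigma>\<^sup>2) powr (-1/2)) ^ DIM('a) = ((2*pi*\<sigma>\<^sup>2) powr (-1/2)) powr (real DIM('a))"
        using assms by (subst powr_realpow) auto
      also have "\<dots> = (2*pi*\<sigma>\<^sup>2) powr (- real DIM('a) / 2)"
        by (simp add: powr_powr)
      finally show ?thesis .
    qed
  also have "(\<Sum>b\<in>Basis. (g\<bullet>b) * (z\<bullet>b) - ((z\<bullet>b) - (x\<bullet>b))\<^sup>2/(2*\<sigma>\<^sup>2))
      = g \<bullet> z + (- (norm (x - z))\<^sup>2 / (2*\<sigma>\<^sup>2))"
  proof -
    have 1: "g \<bullet> z = (\<Sum>b\<in>Basis. (g\<bullet>b) * (z\<bullet>b))" by (rule euclidean_inner)
    have 2: "(norm (x - z))\<^sup>2 = (\<Sum>b\<in>Basis. ((z\<bullet>b) - (x\<bullet>b))\<^sup>2)"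
      unfolding power2_norm_eq_inner by (subst euclidean_inner) (simp add: inner_diff_left power2_eq_square algebra_simps)
    show ?thesis unfolding 1 2 by (simp add: sum_subtractf sum_divide_distrib)
  qed
  finally show ?thesis unfolding gauss_density_def by (simp add: exp_diff exp_minus field_simps)
qed

lemma gauss_mgf:
  fixes x g :: "'a::euclidean_space"
  assumes "\<sigma> > 0"
  shows "(\<integral>\<^sup>+z. ennreal (exp (g \<bullet> z) * gauss_density \<sigma> (x - z)) \<partial>lborel)
     = ennreal (exp (g \<bullet> x + \<sigma>\<^sup>2 * (norm g)\<^sup>2 / 2))"
proof -
  define f where "f b t = ennreal ((2*pi*\<sigma>\<^sup>2) powr (-1/2) * exp ((g\<bullet>b) * t - (t - (x\<bullet>b))\<^sup>2/(2*\<sigma>\<^sup>2)))" for b t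
  have "(\<integral>\<^sup>+z. ennreal (exp (g \<bullet> z) * gauss_density \<sigma> (x - z)) \<partial>lborel)
      = (\<integral>\<^sup>+z. (\<Prod>b\<in>Basis. f b (z \<bullet> b)) \<partial>lborel)"
    unfolding gauss_density_prod[OF assms] f_def
    by (subst prod_ennreal) auto
  also have "\<dots> = (\<Prod>b\<in>Basis. (\<integral>\<^sup>+t. f b t \<partial>lborel))"
    by (rule nn_integral_lborel_prod) (auto simp: f_def)
  also have "\<dots> = (\<Prod>b\<in>Basis. ennreal (exp ((g\<bullet>b) * (x\<bullet>b) + \<sigma>\<^sup>2 * (g\<bullet>b)\<^sup>2/2)))"
  proof (rule prod.cong[OF refl])
    fix b :: 'a
    have s: "(2*pi*\<sigma>\<^sup>2) powr (-1/2) * sqrt (2*pi*\<sigma>\<^sup>2) = 1"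
      using assms by (simp add: powr_minus powr_half_sqrt[symmetric] del: real_sqrt_mult)
    have "(\<integral>\<^sup>+t. f b t \<partial>lborel) = ennreal ((2*pi*\<sigma>\<^sup>2) powr (-1/2)) *
        (\<integral>\<^sup>+t. ennreal (exp ((g\<bullet>b) * t - (t - (x\<bullet>b))\<^sup>2/(2*\<sigma>\<^sup>2))) \<partial>lborel)"
      unfolding f_def by (subst nn_integral_cmult[symmetric]) (auto simp: ennreal_mult)
    also have "\<dots> = ennreal ((2*pi*\<sigma>\<^sup>2) powr (-1/2) * (sqrt (2*pi*\<sigma>\<^sup>2) * exp ((g\<bullet>b) * (x\<bullet>b) + \<sigma>\<^sup>2 * (g\<bullet>b)\<^sup>2/2)))"
      unfolding gauss_1d[OF assms] by (simp add: ennreal_mult)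
    also have "\<dots> = ennreal (exp ((g\<bullet>b) * (x\<bullet>b) + \<sigma>\<^sup>2 * (g\<bullet>b)\<^sup>2/2))"
      using s by (simp add: mult.assoc[symmetric])
    finally show "(\<integral>\<^sup>+t. f b t \<partial>lborel) = ennreal (exp ((g\<bullet>b) * (x\<bullet>b) + \<sigma>\<^sup>2 * (g\<bullet>b)\<^sup>2/2))" .
  qed
  also have "\<dots> = ennreal (exp (\<Sum>b\<in>Basis. (g\<bullet>b) * (x\<bullet>b) + \<sigma>\<^sup>2 * (g\<bullet>b)\<^sup>2/2))"
    by (simp add: prod_ennreal exp_sum)
  also have "(\<Sum>b\<in>Basis. (g\<bullet>b) * (x\<bullet>b) + \<sigma>\<^sup>2 * (g\<bullet>b)\<^sup>2/2) = g \<bullet> x + \<sigma>\<^sup>2 * (norm g)\<^sup>2 / 2"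
  proof -
    have n: "(norm g)\<^sup>2 = (\<Sum>b\<in>Basis. (g\<bullet>b)\<^sup>2)"
      unfolding power2_norm_eq_inner by (subst euclidean_inner) (simp add: power2_eq_square)
    have "(\<Sum>b\<in>Basis. \<sigma>\<^sup>2 * (g\<bullet>b)\<^sup>2/2) = \<sigma>\<^sup>2 * (\<Sum>b\<in>Basis. (g\<bullet>b)\<^sup>2) / 2"
      by (simp add: sum_divide_distrib[symmetric] sum_distrib_left[symmetric])
    then show ?thesis by (simp add: sum.distrib euclidean_inner[of g x] n)
  qed
  finally show ?thesis .
qed



lemma gauss_nonneg: "gauss_density \<sigma> w \<ge> 0"
  unfolding gauss_density_def by simp

lemma gauss_le: "gauss_density \<sigma> (w::'a::euclidean_space) \<le> (2 * pi * \<sigma>\<^sup>2) powr (- real DIM('a) / 2)"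
  unfolding gauss_density_def by (rule mult_left_le) auto

lemma gauss_cont: "continuous_on UNIV (gauss_density \<sigma> :: 'a::euclidean_space \<Rightarrow> real)"
proof -
  define c where "c = 1 / (2 * \<sigma>\<^sup>2)"
  have "gauss_density \<sigma> = (\<lambda>w::'a. (2 * pi * \<sigma>\<^sup>2) powr (- real DIM('a) / 2) * exp ((- (norm w)\<^sup>2) * c))"
    unfolding c_def by (simp add: fun_eq_iff gauss_density_def)
  moreover have "continuous_on UNIV (\<lambda>w::'a. (2 * pi * \<sigma>\<^sup>2) powr (- real DIM('a) / 2) * exp ((- (norm w)\<^sup>2) * c))"
    by (intro continuous_intros)
  ultimately show ?thesis by simp
qed

lemma gauss_meas[measurable]: "gauss_density \<sigma> \<in> (borel_measurable borel :: ('a::euclidean_space \<Rightarrow> real) set)"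
  using gauss_cont by (rule borel_measurable_continuous_onI)

lemma mgf_hbi:
  fixes x g :: "'a::euclidean_space"
  assumes "\<sigma> > 0"
  shows "has_bochner_integral lborel (\<lambda>z. exp (g \<bullet> z) * gauss_density \<sigma> (x - z)) (exp (g \<bullet> x + \<sigma>\<^sup>2 * (norm g)\<^sup>2 / 2))"
  by (rule has_bochner_integral_nn_integral) (auto simp: gauss_nonneg gauss_mgf[OF assms])

lemma conv_integrable:
  fixes p :: "'a::euclidean_space \<Rightarrow> real"
  assumes "integrable lborel p"
  shows "integrable lborel (\<lambda>z. p z * gauss_density \<sigma> (x - z))"
proof -
  let ?C = "(2 * pi * \<sigma>\<^sup>2) powr (- real DIM('a) / 2)"
  have 1: "integrable lborel (\<lambda>z. ?C * p z)"
    using assms by simp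
  have [measurable]: "p \<in> borel_measurable lborel" using assms by simp
  have 2: "(\<lambda>z. p z * gauss_density \<sigma> (x - z)) \<in> borel_measurable lborel" by measurable
  have 3: "AE z in lborel. norm (p z * gauss_density \<sigma> (x - z)) \<le> norm (?C * p z)"
  proof (rule AE_I2)
    fix z
    have "\<bar>p z\<bar> * gauss_density \<sigma> (x - z) \<le> \<bar>p z\<bar> * ?C"
      by (rule mult_left_mono[OF gauss_le]) simp
    then show "norm (p z * gauss_density \<sigma> (x - z)) \<le> norm (?C * p z)"
      by (simp add: abs_mult gauss_nonneg algebra_simps)
  qed
  show ?thesis by (rule Bochner_Integration.integrable_bound[OF 1 2 3])
qed

lemma conv_pos:
  fixes p :: "'a::euclidean_space \<Rightarrow> real"
  assumes "integrable lborel p" "\<And>x. p x > 0" "\<sigma> > 0"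
  shows "smoothed_density p \<sigma> x > 0"
proof -
  have gp: "gauss_density \<sigma> w > 0" for w :: 'a
    using assms(3) unfolding gauss_density_def by simp
  have i: "integrable lborel (\<lambda>z. p z * gauss_density \<sigma> (x - z))" by (rule conv_integrable[OF assms(1)])
  have nn: "AE z in lborel. 0 \<le> p z * gauss_density \<sigma> (x - z)"
    using assms(2) gp by (auto intro!: less_imp_le)
  have ge: "smoothed_density p \<sigma> x \<ge> 0"
    unfolding smoothed_density_def using nn by (intro integral_nonneg_AE) auto
  have "smoothed_density p \<sigma> x \<noteq> 0"
  proof
    assume "smoothed_density p \<sigma> x = 0"
    then have "AE z in lborel. p z * gauss_density \<sigma> (x - z) = 0"
      unfolding smoothed_density_def using integral_nonneg_eq_0_iff_AE[OF i nn] by simp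
    moreover have "\<And>z. p z * gauss_density \<sigma> (x - z) \<noteq> 0"
      using assms(2) gp by (metis mult_pos_pos less_irrefl)
    ultimately have "AE z in (lborel::'a measure). False"
      by simp
    then have "ae_filter (lborel::'a measure) = bot" using trivial_limit_def by blast
    then show False by (simp add: ae_filter_eq_bot_iff)
  qed
  with ge show ?thesis by simp
qed

lemma conv_cont:
  fixes p :: "'a::euclidean_space \<Rightarrow> real"
  assumes "integrable lborel p"
  shows "continuous_on UNIV (smoothed_density p \<sigma>)"
proof (rule continuous_on_sequentiallyI)
  fix u :: "nat \<Rightarrow> 'a" and a assume u: "u \<longlonglongrightarrow> a"
  have [measurable]: "p \<in> borel_measurable lborel" using assms by simp
  let ?C = "(2 * pi * \<sigma>\<^sup>2) powr (- real DIM('a) / 2)"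
  show "(\<lambda>n. smoothed_density p \<sigma> (u n)) \<longlonglongrightarrow> smoothed_density p \<sigma> a"
    unfolding smoothed_density_def
  proof (rule integral_dominated_convergence[where w="\<lambda>z. ?C * norm (p z)"])
    show "integrable lborel (\<lambda>z. ?C * norm (p z))" using assms by simp
    show "(\<lambda>z. p z * gauss_density \<sigma> (a - z)) \<in> borel_measurable lborel" by measurable
    show "(\<lambda>z. p z * gauss_density \<sigma> (u n - z)) \<in> borel_measurable lborel" for n by measurable
    show "AE z in lborel. (\<lambda>n. p z * gauss_density \<sigma> (u n - z)) \<longlonglongrightarrow> p z * gauss_density \<sigma> (a - z)"
    proof (rule AE_I2)
      fix z
      have "(\<lambda>n. u n - z) \<longlonglongrightarrow> a - z" using u by (intro tendsto_intros)
      then have "(\<lambda>n. gauss_density \<sigma> (u n - z)) \<longlonglongrightarrow> gauss_density \<sigma> (a - z)"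
        using gauss_cont[of \<sigma>] by (metis UNIV_I continuous_on_def tendsto_compose at_within_open open_UNIV)
      then show "(\<lambda>n. p z * gauss_density \<sigma> (u n - z)) \<longlonglongrightarrow> p z * gauss_density \<sigma> (a - z)"
        by (intro tendsto_intros)
    qed
    show "AE z in lborel. norm (p z * gauss_density \<sigma> (u n - z)) \<le> ?C * norm (p z)" for n
    proof (rule AE_I2)
      fix z
      have "\<bar>p z\<bar> * gauss_density \<sigma> (u n - z) \<le> \<bar>p z\<bar> * ?C"
        by (rule mult_left_mono[OF gauss_le]) simp
      then show "norm (p z * gauss_density \<sigma> (u n - z)) \<le> ?C * norm (p z)"
        by (simp add: abs_mult gauss_nonneg algebra_simps)
    qed
  qed
qed



lemma concave_tangent:
  fixes f :: "'a::real_normed_vector \<Rightarrow> real"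
  assumes conc: "concave_on UNIV f" and der: "(f has_derivative D) (at x)"
  shows "f z \<le> f x + D (z - x)"
proof -
  define h where "h = z - x"
  define g where "g t = f (x + t *\<^sub>R h)" for t :: real
  have lin: "linear D" using der by (rule has_derivative_linear)
  have d1: "((\<lambda>t::real. x + t *\<^sub>R h) has_derivative (\<lambda>t. t *\<^sub>R h)) (at 0)"
    by (auto intro!: derivative_eq_intros)
  have "((f \<circ> (\<lambda>t::real. x + t *\<^sub>R h)) has_derivative (D \<circ> (\<lambda>t. t *\<^sub>R h))) (at 0)"
    by (rule diff_chain_at[OF d1]) (simp add: der)
  moreover have "(D \<circ> (\<lambda>t. t *\<^sub>R h)) = (\<lambda>t. t * D h)"
    using lin by (auto simp: fun_eq_iff linear_scale)
  ultimately have "(g has_derivative (\<lambda>t. t * D h)) (at 0)"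
    by (simp add: g_def[abs_def] comp_def)
  then have "(g has_field_derivative D h) (at 0)"
  proof -
    have "(\<lambda>t. t * D h) = (*) (D h)" by (auto simp: fun_eq_iff)
    with \<open>(g has_derivative (\<lambda>t. t * D h)) (at 0)\<close> show ?thesis
      by (simp add: has_field_derivative_def)
  qed
  then have "(g has_field_derivative D h) (at 0 within {0<..})"
    by (rule has_field_derivative_at_within)
  then have lim: "((\<lambda>t. (g t - g 0) / (t - 0)) \<longlongrightarrow> D h) (at_right 0)"
    by (simp add: has_field_derivative_iff)
  have ev: "eventually (\<lambda>t. f z - f x \<le> (g t - g 0) / (t - 0)) (at_right (0::real))"
  proof -
    have "eventually (\<lambda>t. 0 < t \<and> t < 1) (at_right (0::real))"
      by (intro eventually_conj eventually_at_right_less) (auto simp: eventually_at_right_field intro: exI[of _ 1])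
    then show ?thesis
    proof (rule eventually_mono)
      fix t :: real assume t: "0 < t \<and> t < 1"
      have "f ((1 - t) *\<^sub>R x + t *\<^sub>R z) \<ge> (1 - t) * f x + t * f z"
        using concave_onD[OF conc, of t x z] t by auto
      moreover have "(1 - t) *\<^sub>R x + t *\<^sub>R z = x + t *\<^sub>R h"
        by (simp add: h_def algebra_simps)
      ultimately have "g t - g 0 \<ge> t * (f z - f x)"
        by (simp add: g_def algebra_simps)
      then show "f z - f x \<le> (g t - g 0) / (t - 0)"
        using t by (simp add: field_simps)
    qed
  qed
  have "f z - f x \<le> D h"
    by (rule tendsto_lowerbound[OF lim ev]) simp
  then show ?thesis by (simp add: h_def)
qed

lemma conv_upper:
  fixes p :: "'a::euclidean_space \<Rightarrow> real"
  assumes "integrable lborel p" "\<sigma> > 0" "\<And>z. p z \<le> exp (c + g \<bullet> z)"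
  shows "smoothed_density p \<sigma> x \<le> exp (c + g \<bullet> x + \<sigma>\<^sup>2 * (norm g)\<^sup>2 / 2)"
proof -
  have hb: "has_bochner_integral lborel (\<lambda>z. exp c * (exp (g \<bullet> z) * gauss_density \<sigma> (x - z)))
      (exp c * exp (g \<bullet> x + \<sigma>\<^sup>2 * (norm g)\<^sup>2 / 2))"
    by (intro has_bochner_integral_mult_right mgf_hbi assms(2))
  have "smoothed_density p \<sigma> x \<le> (\<integral>z. exp c * (exp (g \<bullet> z) * gauss_density \<sigma> (x - z)) \<partial>lborel)"
    unfolding smoothed_density_def
  proof (rule integral_mono)
    show "integrable lborel (\<lambda>z. p z * gauss_density \<sigma> (x - z))" by (rule conv_integrable[OF assms(1)])
    show "integrable lborel (\<lambda>z. exp c * (exp (g \<bullet> z) * gauss_density \<sigma> (x - z)))"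
      using hb by (simp add: has_bochner_integral_iff)
    fix z
    have "p z * gauss_density \<sigma> (x - z) \<le> exp (c + g \<bullet> z) * gauss_density \<sigma> (x - z)"
      by (rule mult_right_mono[OF assms(3) gauss_nonneg])
    then show "p z * gauss_density \<sigma> (x - z) \<le> exp c * (exp (g \<bullet> z) * gauss_density \<sigma> (x - z))"
      by (simp add: exp_add)
  qed
  also have "\<dots> = exp c * exp (g \<bullet> x + \<sigma>\<^sup>2 * (norm g)\<^sup>2 / 2)"
    using hb by (rule has_bochner_integral_integral_eq)
  finally show ?thesis by (simp add: exp_add[symmetric] add.assoc)
qed

lemma exists_min:
  fixes f :: "'a::euclidean_space \<Rightarrow> real"
  assumes cont: "continuous_on UNIV f" and bd: "\<And>x. f x \<ge> (norm x)\<^sup>2 / 2 - B * norm x - A"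
  shows "\<exists>x. \<forall>z. f x \<le> f z"
proof -
  define R where "R = 2 * \<bar>B\<bar> + 2 * \<bar>A\<bar> + 2 * \<bar>f 0\<bar> + 2"
  have "\<exists>x\<in>cball 0 R. \<forall>y\<in>cball 0 R. f x \<le> f y"
    by (rule continuous_attains_inf) (auto simp: R_def intro: continuous_on_subset[OF cont])
  then obtain x where x: "x \<in> cball 0 R" "\<forall>y\<in>cball 0 R. f x \<le> f y" by blast
  have "f x \<le> f z" for z
  proof (cases "z \<in> cball 0 R")
    case True then show ?thesis using x by auto
  next
    case False
    define n where "n = norm z"
    have n: "n > R" using False by (simp add: n_def)
    have n1: "n \<ge> 1" "n / 2 - B \<ge> \<bar>A\<bar> + \<bar>f 0\<bar> + 1" using n by (auto simp: R_def)
    have "n * (n / 2 - B) \<ge> 1 * (\<bar>A\<bar> + \<bar>f 0\<bar> + 1)"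
      by (rule mult_mono) (use n1 in auto)
    then have "(norm z)\<^sup>2 / 2 - B * norm z - A \<ge> f 0"
      by (simp add: n_def[symmetric] power2_eq_square algebra_simps)
    then have "f z \<ge> f 0" using bd[of z] by linarith
    moreover have "f x \<le> f 0" using x(2) R_def by auto
    ultimately show ?thesis by linarith
  qed
  then show ?thesis by blast
qed



lemma exp_sym_ge: "exp (t::real) + exp (- t) \<ge> t\<^sup>2 / 4"
proof -
  have key: "exp s \<ge> s\<^sup>2 / 4" if "s \<ge> 0" for s :: real
  proof -
    have "exp s = (exp (s/2))\<^sup>2" by (simp add: exp_double[symmetric])
    moreover have "(1 + s/2)\<^sup>2 \<le> (exp (s/2))\<^sup>2"
      using that by (intro power_mono exp_ge_add_one_self) auto
    moreover have "s\<^sup>2 / 4 \<le> (1 + s/2)\<^sup>2" using that by (simp add: power2_eq_square field_simps)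
    ultimately show ?thesis by linarith
  qed
  show ?thesis
  proof (cases "t \<ge> 0")
    case True then show ?thesis using key[of t] by (smt (verit) exp_gt_zero)
  next
    case False then show ?thesis using key[of "-t"] by (smt (verit) exp_gt_zero power2_minus)
  qed
qed

lemma norm_sq_basis: "(norm (u::'a::euclidean_space))\<^sup>2 = (\<Sum>b\<in>Basis. (u \<bullet> b)\<^sup>2)"
  unfolding power2_norm_eq_inner by (subst euclidean_inner) (simp add: power2_eq_square)

lemma conv_lower_bound:
  fixes p :: "'a::euclidean_space \<Rightarrow> real"
  assumes int: "integrable lborel p" and sig: "\<sigma> > 0" and r: "r > 0" and q: "q \<ge> 0"
    and near: "\<And>z. dist z x0 < r \<Longrightarrow> p z \<ge> q" and pos: "\<And>z. p z \<ge> 0"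
  shows "smoothed_density p \<sigma> x0 \<ge> q * (1 - 8 * real DIM('a) * exp (1/2) / r\<^sup>2 * \<sigma>\<^sup>2)"
proof -
  define \<phi> where "\<phi> z = gauss_density \<sigma> (x0 - z)" for z
  define K where "K = 4 * \<sigma>\<^sup>2 / r\<^sup>2"
  define S where "S z = (\<Sum>b\<in>Basis. exp ((b \<bullet> (z - x0)) / \<sigma>) + exp (- ((b \<bullet> (z - x0)) / \<sigma>)))" for z
  define LB where "LB z = q * (exp ((0::'a) \<bullet> z) * \<phi> z) - q * K *
      (\<Sum>b\<in>Basis. exp (-(b \<bullet> x0)/\<sigma>) * (exp (((1/\<sigma>) *\<^sub>R b) \<bullet> z) * \<phi> z)
                + exp ((b \<bullet> x0)/\<sigma>) * (exp (((-1/\<sigma>) *\<^sub>R b) \<bullet> z) * \<phi> z))" for z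
  have K0: "K \<ge> 0" by (simp add: K_def)
  have S0: "S z \<ge> 0" for z unfolding S_def by (intro sum_nonneg) (simp add: add_nonneg_nonneg)
  have LBeq: "LB z = q * (1 - K * S z) * \<phi> z" for z
  proof -
    have t1: "exp (- (b \<bullet> x0 / \<sigma>)) * exp (b \<bullet> z / \<sigma>) = exp (b \<bullet> (z - x0) / \<sigma>)" for b
      by (simp add: exp_add[symmetric] inner_diff_right inner_commute diff_divide_distrib)
    have t2: "exp (b \<bullet> x0 / \<sigma>) * exp (- (b \<bullet> z / \<sigma>)) = exp (- (b \<bullet> (z - x0) / \<sigma>))" for b
      by (simp add: exp_add[symmetric] inner_diff_right inner_commute diff_divide_distrib)
    have "(\<Sum>b\<in>Basis. exp (-(b \<bullet> x0)/\<sigma>) * (exp (((1/\<sigma>) *\<^sub>R b) \<bullet> z) * \<phi> z)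
                + exp ((b \<bullet> x0)/\<sigma>) * (exp (((-1/\<sigma>) *\<^sub>R b) \<bullet> z) * \<phi> z)) = S z * \<phi> z"
      unfolding S_def sum_distrib_right
      by (intro sum.cong refl) (simp add: mult.assoc[symmetric] t1 t2 distrib_right)
    then show ?thesis unfolding LB_def by (simp add: algebra_simps)
  qed
  have pw: "LB z \<le> p z * \<phi> z" for z
  proof -
    have "q * (1 - K * S z) \<le> p z"
    proof (cases "dist z x0 < r")
      case True
      have "q * (1 - K * S z) \<le> q" using q K0 S0 by (simp add: mult_nonneg_nonneg algebra_simps)
      then show ?thesis using near[OF True] by linarith
    next
      case False
      have "(norm (z - x0))\<^sup>2 / (4 * \<sigma>\<^sup>2) = (\<Sum>b\<in>Basis. ((b \<bullet> (z - x0)) / \<sigma>)\<^sup>2 / 4)"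
        unfolding norm_sq_basis using sig
        by (simp add: sum_divide_distrib power_divide inner_commute mult.commute)
      also have "\<dots> \<le> S z" unfolding S_def by (intro sum_mono exp_sym_ge)
      finally have 1: "(norm (z - x0))\<^sup>2 / (4 * \<sigma>\<^sup>2) \<le> S z" .
      have "r\<^sup>2 \<le> (norm (z - x0))\<^sup>2" using False r by (simp add: dist_norm power_mono)
      then have "r\<^sup>2 / (4 * \<sigma>\<^sup>2) \<le> S z" using 1 sig
        by (smt (verit) divide_right_mono zero_le_mult_iff zero_less_power)
      then have "1 \<le> K * S z" using sig r unfolding K_def by (simp add: field_simps)
      then have "q * (1 - K * S z) \<le> 0" using q by (simp add: mult_nonneg_nonpos)
      then show ?thesis using pos[of z] by linarith
    qed
    then show ?thesis unfolding LBeq by (rule mult_right_mono) (simp add: \<phi>_def gauss_nonneg)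
  qed
  define V where "V = q * exp ((0::'a) \<bullet> x0 + \<sigma>\<^sup>2 * (norm (0::'a))\<^sup>2 / 2) - q * K *
      (\<Sum>b\<in>Basis. exp (-(b \<bullet> x0)/\<sigma>) * exp (((1/\<sigma>) *\<^sub>R b) \<bullet> x0 + \<sigma>\<^sup>2 * (norm ((1/\<sigma>) *\<^sub>R b))\<^sup>2 / 2)
                + exp ((b \<bullet> x0)/\<sigma>) * exp (((-1/\<sigma>) *\<^sub>R b) \<bullet> x0 + \<sigma>\<^sup>2 * (norm ((-1/\<sigma>) *\<^sub>R b))\<^sup>2 / 2))"
  have hb: "has_bochner_integral lborel LB V"
    unfolding LB_def[abs_def] V_def \<phi>_def
    by (intro has_bochner_integral_diff has_bochner_integral_mult_right has_bochner_integral_sum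
        has_bochner_integral_add mgf_hbi sig)
  have V: "V = q * (1 - 8 * real DIM('a) * exp (1/2) / r\<^sup>2 * \<sigma>\<^sup>2)"
  proof -
    have "(\<Sum>b\<in>Basis. exp (-(b \<bullet> x0)/\<sigma>) * exp (((1/\<sigma>) *\<^sub>R b) \<bullet> x0 + \<sigma>\<^sup>2 * (norm ((1/\<sigma>) *\<^sub>R b))\<^sup>2 / 2)
                + exp ((b \<bullet> x0)/\<sigma>) * exp (((-1/\<sigma>) *\<^sub>R b) \<bullet> x0 + \<sigma>\<^sup>2 * (norm ((-1/\<sigma>) *\<^sub>R b))\<^sup>2 / 2))
        = (\<Sum>b\<in>(Basis::'a set). 2 * exp (1/2))"
    proof (intro sum.cong refl)
      fix b :: 'a assume b: "b \<in> Basis"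
      have n: "\<sigma>\<^sup>2 * (norm ((1/\<sigma>) *\<^sub>R b))\<^sup>2 / 2 = 1/2" "\<sigma>\<^sup>2 * (norm ((-1/\<sigma>) *\<^sub>R b))\<^sup>2 / 2 = 1/2"
        using b sig by (auto simp: power2_eq_square field_simps)
      show "exp (-(b \<bullet> x0)/\<sigma>) * exp (((1/\<sigma>) *\<^sub>R b) \<bullet> x0 + \<sigma>\<^sup>2 * (norm ((1/\<sigma>) *\<^sub>R b))\<^sup>2 / 2)
                + exp ((b \<bullet> x0)/\<sigma>) * exp (((-1/\<sigma>) *\<^sub>R b) \<bullet> x0 + \<sigma>\<^sup>2 * (norm ((-1/\<sigma>) *\<^sub>R b))\<^sup>2 / 2)
            = 2 * exp (1/2)"
        unfolding n by (simp add: exp_add[symmetric] inner_commute)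
    qed
    then show ?thesis unfolding V_def K_def using r sig by (simp add: field_simps)
  qed
  have "V \<le> smoothed_density p \<sigma> x0"
    unfolding smoothed_density_def has_bochner_integral_integral_eq[OF hb, symmetric]
  proof (rule integral_mono)
    show "integrable lborel LB" using hb by (simp add: has_bochner_integral_iff)
    show "integrable lborel (\<lambda>z. p z * gauss_density \<sigma> (x0 - z))" by (rule conv_integrable[OF int])
    show "LB z \<le> p z * gauss_density \<sigma> (x0 - z)" for z using pw[of z] by (simp add: \<phi>_def)
  qed
  then show ?thesis using V by simp
qed



lemma conv_lower_ev:
  fixes p :: "'a::euclidean_space \<Rightarrow> real"
  assumes int: "integrable lborel p" and pos: "\<And>z. p z > 0" and cont: "isCont p x0" and c: "c < p x0"
  shows "eventually (\<lambda>\<sigma>. smoothed_density p \<sigma> x0 > c) (at_right 0)"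
proof -
  define \<epsilon> where "\<epsilon> = min ((p x0 - c) / 2) (p x0 / 2)"
  have \<epsilon>: "\<epsilon> > 0" "\<epsilon> \<le> (p x0 - c) / 2" "\<epsilon> \<le> p x0 / 2" using c pos[of x0] by (auto simp: \<epsilon>_def min_def)
  obtain r where r: "r > 0" "\<And>z. dist z x0 < r \<Longrightarrow> dist (p z) (p x0) < \<epsilon>"
    using cont \<epsilon>(1) unfolding continuous_at_eps_delta by blast
  define q where "q = p x0 - \<epsilon>"
  have q: "q \<ge> 0" "q \<le> p x0" using \<epsilon> by (auto simp: q_def)
  have near: "\<And>z. dist z x0 < r \<Longrightarrow> p z \<ge> q"
    using r(2) by (force simp: q_def dist_real_def abs_less_iff)
  define A where "A = 8 * real DIM('a) * exp (1/2) / r\<^sup>2"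
  have A: "A \<ge> 0" by (simp add: A_def)
  have lb: "\<And>\<sigma>. \<sigma> > 0 \<Longrightarrow> smoothed_density p \<sigma> x0 \<ge> q * (1 - A * \<sigma>\<^sup>2)"
    unfolding A_def using conv_lower_bound[OF int _ r(1) q(1) near] pos by (simp add: less_imp_le)
  have "((\<lambda>\<sigma>::real. \<sigma>\<^sup>2 * (A * p x0 + 1)) \<longlongrightarrow> 0\<^sup>2 * (A * p x0 + 1)) (at_right 0)"
    by (intro tendsto_intros)
  then have "eventually (\<lambda>\<sigma>::real. \<sigma>\<^sup>2 * (A * p x0 + 1) < \<epsilon>) (at_right 0)"
    using \<epsilon>(1) by (intro order_tendstoD(2)) auto
  moreover have "eventually (\<lambda>\<sigma>::real. \<sigma> > 0) (at_right 0)"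
    by (simp add: eventually_at_right_less)
  ultimately show ?thesis
  proof (eventually_elim)
    case (elim \<sigma>)
    have "q * (A * \<sigma>\<^sup>2) \<le> p x0 * (A * \<sigma>\<^sup>2)" using q A by (intro mult_right_mono) auto
    moreover have "p x0 * (A * \<sigma>\<^sup>2) \<le> \<sigma>\<^sup>2 * (A * p x0 + 1)" by (simp add: algebra_simps)
    ultimately have "q * (A * \<sigma>\<^sup>2) < \<epsilon>" using elim(1) zero_le_power2[of \<sigma>] by linarith
    then have "q * (1 - A * \<sigma>\<^sup>2) > q - \<epsilon>" by (simp add: right_diff_distrib)
    moreover have "q - \<epsilon> \<ge> c" using \<epsilon> by (simp add: q_def)
    ultimately show ?case using lb[OF elim(2)] by linarith
  qed
qed

lemma sq_lower: "(1/2) * (norm (y - x))\<^sup>2 \<ge> (norm (x::'a::real_inner))\<^sup>2 / 2 - norm y * norm x"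
proof -
  have "(norm (y - x))\<^sup>2 = (norm y)\<^sup>2 - 2 * (y \<bullet> x) + (norm x)\<^sup>2"
    by (simp add: power2_norm_eq_inner inner_diff_left inner_diff_right inner_commute)
  moreover have "y \<bullet> x \<le> norm y * norm x" by (rule norm_cauchy_schwarz)
  ultimately show ?thesis using zero_le_power2[of "norm y"] by linarith
qed

lemma argmin_ok:
  assumes "\<exists>x. \<forall>z. f x \<le> (f z :: real)"
  shows "f (arg_min f (\<lambda>_. True)) \<le> f z"
proof -
  have "\<exists>x. is_arg_min f (\<lambda>_. True) x" using assms by (auto simp: is_arg_min_def not_less)
  then have "is_arg_min f (\<lambda>_. True) (arg_min f (\<lambda>_. True))"
    unfolding arg_min_def by (rule someI_ex)
  then show ?thesis by (auto simp: is_arg_min_def not_less)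
qed

theorem lemma4:
  fixes p :: "'a::euclidean_space \<Rightarrow> real" and \<tau> :: real and y :: 'a
  assumes pos: "\<And>x. p x > 0"
    and integrable: "integrable lborel p"
    and total: "(\<integral>x. p x \<partial>lborel) = 1"
    and logconcave: "concave_on UNIV (\<lambda>x. ln (p x))"
    and smooth: "thrice_diff_bdd_third (\<lambda>x. ln (p x))"
    and tau: "\<tau> > 0"
  shows "((\<lambda>\<sigma>. prox \<tau> (\<lambda>x. - ln (smoothed_density p \<sigma> x)) y)
           \<longlongrightarrow> prox \<tau> (\<lambda>x. - ln (p x)) y) (at_right 0)"
proof -
  obtain G where der: "\<And>x. ((\<lambda>x. ln (p x)) has_derivative (\<lambda>h. G x \<bullet> h)) (at x)"
    using smooth unfolding thrice_diff_bdd_third_def by blast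
  have tang: "ln (p z) \<le> ln (p a) + G a \<bullet> (z - a)" for a z
    using concave_tangent[OF logconcave der[of a]] by simp
  have pexp: "p x = exp (ln (p x))" for x using pos[of x] by simp
  have lcont: "continuous_on UNIV (\<lambda>x. ln (p x))"
    using der by (intro continuous_at_imp_continuous_on ballI has_derivative_continuous) blast
  have pcont: "isCont p x" for x
  proof -
    define l where "l x = ln (p x)" for x
    have "isCont l x" unfolding l_def[abs_def] using der[of x] by (rule has_derivative_continuous)
    then have "isCont (\<lambda>x. exp (l x)) x" by (intro continuous_intros)
    moreover have "(\<lambda>x. exp (l x)) = p" unfolding l_def using pos by (intro ext exp_ln)
    ultimately show ?thesis by simp
  qed
  define F where "F x = (1/2) * (norm (y - x))\<^sup>2 + \<tau> * (- ln (p x))" for x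
  define x0 where "x0 = prox \<tau> (\<lambda>x. - ln (p x)) y"
  have Fex: "\<exists>x. \<forall>z. F x \<le> F z"
  proof (rule exists_min)
    have pne: "p x \<noteq> 0" for x using pos[of x] by simp
    have "continuous_on UNIV p" by (simp add: continuous_at_imp_continuous_on pcont)
    then show "continuous_on UNIV F" unfolding F_def using pne by (intro continuous_intros) auto
    fix x
    have "- ln (p x) \<ge> - ln (p 0) - norm (G 0) * norm x"
      using tang[of x 0] norm_cauchy_schwarz[of "G 0" x] by simp
    then have "\<tau> * (- ln (p x)) \<ge> \<tau> * (- ln (p 0) - norm (G 0) * norm x)"
      using tau by (intro mult_left_mono) auto
    then show "F x \<ge> (norm x)\<^sup>2 / 2 - (norm y + \<tau> * norm (G 0)) * norm x - \<tau> * ln (p 0)"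
      unfolding F_def using sq_lower[where x=x and y=y] by (simp add: algebra_simps)
  qed
  have x0min: "F x0 \<le> F z" for z
    unfolding x0_def prox_def using argmin_ok[OF Fex] by (simp add: F_def[abs_def])
  define G0 where "G0 = G x0"
  have foc: "x0 - y = \<tau> *\<^sub>R G0"
  proof -
    have d1: "((\<lambda>x. (1/2) * (norm (y - x))\<^sup>2) has_derivative (\<lambda>h. (x0 - y) \<bullet> h)) (at x0)"
    proof -
      have e: "(\<lambda>x. (1/2) * (norm (y - x))\<^sup>2) = (\<lambda>x. (1/2) * ((y - x) \<bullet> (y - x)))"
        by (simp add: power2_norm_eq_inner)
      show ?thesis unfolding e
        by (auto intro!: derivative_eq_intros simp: inner_commute algebra_simps inner_diff_right inner_diff_left)
    qed
    have d2: "((\<lambda>x. \<tau> * (- ln (p x))) has_derivative (\<lambda>h. \<tau> * (- (G0 \<bullet> h)))) (at x0)"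
      unfolding G0_def by (intro derivative_intros der)
    have "(F has_derivative (\<lambda>h. (x0 - y) \<bullet> h + \<tau> * (- (G0 \<bullet> h)))) (at x0)"
      unfolding F_def[abs_def] using has_derivative_add[OF d1 d2] by simp
    then have "(\<lambda>h. (x0 - y) \<bullet> h + \<tau> * (- (G0 \<bullet> h))) = (\<lambda>h. 0)"
      by (rule has_derivative_local_min) (simp add: x0min)
    then have "(x0 - y) \<bullet> (x0 - y - \<tau> *\<^sub>R G0) + \<tau> * (- (G0 \<bullet> (x0 - y - \<tau> *\<^sub>R G0))) = 0"
      by metis
    then have "(x0 - y - \<tau> *\<^sub>R G0) \<bullet> (x0 - y - \<tau> *\<^sub>R G0) = 0"
      by (simp add: inner_diff_left inner_diff_right algebra_simps)
    then show ?thesis by simp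
  qed
  define F\<sigma> where "F\<sigma> \<sigma> x = (1/2) * (norm (y - x))\<^sup>2 + \<tau> * (- ln (smoothed_density p \<sigma> x))" for \<sigma> x
  define x\<sigma> where "x\<sigma> \<sigma> = prox \<tau> (\<lambda>x. - ln (smoothed_density p \<sigma> x)) y" for \<sigma>
  have key: "F\<sigma> \<sigma> x \<ge> F x0 + (1/2) * (norm (x - x0))\<^sup>2 - \<tau> * \<sigma>\<^sup>2 * (norm G0)\<^sup>2 / 2"
    if sig: "\<sigma> > 0" for \<sigma> x
  proof -
    have up: "smoothed_density p \<sigma> x \<le> exp ((ln (p x0) - G0 \<bullet> x0) + G0 \<bullet> x + \<sigma>\<^sup>2 * (norm G0)\<^sup>2 / 2)"
    proof (rule conv_upper[OF integrable sig])
      fix z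
      have "ln (p z) \<le> (ln (p x0) - G0 \<bullet> x0) + G0 \<bullet> z"
        using tang[of z x0] by (simp add: G0_def inner_diff_right)
      then show "p z \<le> exp ((ln (p x0) - G0 \<bullet> x0) + G0 \<bullet> z)"
        by (subst pexp) (rule exp_mono)
    qed
    have "ln (smoothed_density p \<sigma> x) \<le> (ln (p x0) - G0 \<bullet> x0) + G0 \<bullet> x + \<sigma>\<^sup>2 * (norm G0)\<^sup>2 / 2"
      using up conv_pos[OF integrable pos sig, of x] by (metis exp_gt_zero ln_exp ln_le_cancel_iff)
      
    then have "\<tau> * (- ln (smoothed_density p \<sigma> x)) \<ge> \<tau> * (- ((ln (p x0) - G0 \<bullet> x0) + G0 \<bullet> x + \<sigma>\<^sup>2 * (norm G0)\<^sup>2 / 2))"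
      using tau by (intro mult_left_mono) auto
    moreover have "(1/2) * (norm (y - x))\<^sup>2 - \<tau> * (G0 \<bullet> (x - x0)) = (1/2) * (norm (y - x0))\<^sup>2 + (1/2) * (norm (x - x0))\<^sup>2"
    proof -
      have "\<tau> * (G0 \<bullet> (x - x0)) = (x0 - y) \<bullet> (x - x0)" by (simp add: foc)
      moreover have "y - x = (y - x0) - (x - x0)" by simp
      ultimately show ?thesis
        by (simp add: power2_norm_eq_inner inner_diff_left inner_diff_right inner_commute algebra_simps)
    qed
    ultimately show ?thesis unfolding F\<sigma>_def F_def by (simp add: algebra_simps inner_diff_right)
  qed
  have x\<sigma>min: "F\<sigma> \<sigma> (x\<sigma> \<sigma>) \<le> F\<sigma> \<sigma> z" if sig: "\<sigma> > 0" for \<sigma> z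
  proof -
    have ex: "\<exists>x. \<forall>z. F\<sigma> \<sigma> x \<le> F\<sigma> \<sigma> z"
    proof (rule exists_min)
      have "continuous_on UNIV (smoothed_density p \<sigma>)" by (rule conv_cont[OF integrable])
      then show "continuous_on UNIV (F\<sigma> \<sigma>)" unfolding F\<sigma>_def
        using conv_pos[OF integrable pos sig]
        by (intro continuous_intros) (auto simp: less_imp_neq[symmetric])
      fix x
      have "(1/2) * (norm (x0 - x))\<^sup>2 \<ge> (norm x)\<^sup>2 / 2 - norm x0 * norm x" by (rule sq_lower)
      then show "F\<sigma> \<sigma> x \<ge> (norm x)\<^sup>2 / 2 - norm x0 * norm x - (\<tau> * \<sigma>\<^sup>2 * (norm G0)\<^sup>2 / 2 - F x0)"
      proof -
        have "(1/2) * (norm (x - x0))\<^sup>2 \<ge> (norm x)\<^sup>2 / 2 - norm x0 * norm x"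
          using \<open>(1/2) * (norm (x0 - x))\<^sup>2 \<ge> (norm x)\<^sup>2 / 2 - norm x0 * norm x\<close> by (simp add: norm_minus_commute)
        then show ?thesis using key[OF sig, of x] by linarith
      qed
    qed
    show ?thesis unfolding x\<sigma>_def prox_def using argmin_ok[OF ex] by (simp add: F\<sigma>_def[abs_def])
  qed
  have "F x0 = (1/2) * (norm (y - x0))\<^sup>2 - \<tau> * ln (p x0)" by (simp add: F_def)
  show ?thesis
    unfolding x0_def[symmetric] x\<sigma>_def[symmetric, abs_def]
  proof (rule tendstoI)
    fix e :: real assume e: "e > 0"
    have "((\<lambda>\<sigma>::real. \<tau> * \<sigma>\<^sup>2 * (norm G0)\<^sup>2) \<longlongrightarrow> \<tau> * 0\<^sup>2 * (norm G0)\<^sup>2) (at_right 0)"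
      by (intro tendsto_intros)
    then have ev1: "eventually (\<lambda>\<sigma>::real. \<tau> * \<sigma>\<^sup>2 * (norm G0)\<^sup>2 < e\<^sup>2 / 2) (at_right 0)"
      using e by (intro order_tendstoD(2)) auto
    have "exp (ln (p x0) - e\<^sup>2 / (4 * \<tau>)) < p x0"
    proof -
      have "e\<^sup>2 / (4 * \<tau>) > 0" using e tau by simp
      then have "exp (ln (p x0) - e\<^sup>2 / (4 * \<tau>)) < exp (ln (p x0))" by simp
      then show ?thesis using pos[of x0] exp_ln[of "p x0"] by argo
    qed
    from conv_lower_ev[OF integrable pos pcont this]
    have ev2: "eventually (\<lambda>\<sigma>. smoothed_density p \<sigma> x0 > exp (ln (p x0) - e\<^sup>2 / (4 * \<tau>))) (at_right 0)" .
    have ev3: "eventually (\<lambda>\<sigma>::real. \<sigma> > 0) (at_right 0)"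
      by (simp add: eventually_at_right_less)
    from ev1 ev2 ev3 show "eventually (\<lambda>\<sigma>. dist (x\<sigma> \<sigma>) x0 < e) (at_right 0)"
    proof (eventually_elim)
      case (elim \<sigma>)
      have "ln (smoothed_density p \<sigma> x0) > ln (p x0) - e\<^sup>2 / (4 * \<tau>)"
      proof -
        have "ln (exp (ln (p x0) - e\<^sup>2 / (4 * \<tau>))) < ln (smoothed_density p \<sigma> x0)"
          using elim(2) by (subst ln_less_cancel_iff) (auto intro: less_trans[OF exp_gt_zero])
        then show ?thesis by simp
      qed
      then have t: "\<tau> * (ln (p x0) - ln (smoothed_density p \<sigma> x0)) < e\<^sup>2 / 4"
        using tau by (simp add: field_simps)
      have "F x0 + (1/2) * (norm (x\<sigma> \<sigma> - x0))\<^sup>2 - \<tau> * \<sigma>\<^sup>2 * (norm G0)\<^sup>2 / 2 \<le> F\<sigma> \<sigma> (x\<sigma> \<sigma>)"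
        by (rule key[OF elim(3)])
      also have "\<dots> \<le> F\<sigma> \<sigma> x0" by (rule x\<sigma>min[OF elim(3)])
      finally have "(1/2) * (norm (x\<sigma> \<sigma> - x0))\<^sup>2 \<le> \<tau> * \<sigma>\<^sup>2 * (norm G0)\<^sup>2 / 2 + \<tau> * (ln (p x0) - ln (smoothed_density p \<sigma> x0))"
        by (simp add: F_def F\<sigma>_def algebra_simps)
      then have "(norm (x\<sigma> \<sigma> - x0))\<^sup>2 < e\<^sup>2" using t elim(1) by linarith
      then have "norm (x\<sigma> \<sigma> - x0) < e" by (rule power_less_imp_less_base) (use e in simp)
      then show ?case by (simp add: dist_norm)
    qed
  qed
qed


end
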